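(* Let $n\geq 3$, let $X=\mathbb{R}^n$ or $X=S^n$ (the unit sphere in $\mathbb{R}^{n+1}$), and let $\Gamma=\mathrm{Isom}(X)$. Then there exist uncountable sets $W\subset X$ whose pointwise stabilizer in $\Gamma$ is trivial but for which $P(W)$ (with respect to $\Gamma$ and $2$ colors) does not hold; i.e., there is a precoloring $X\setminus W\to\{R,B\}$ admitting no $\Gamma$-distinguishing extension to $X$. In particular $\mathrm{ext}_D(X,\Gamma)=\infty$.
   Context: Let a group $\Gamma$ act faithfully on a set $X$. A coloring $c:X\to\{R,B\}$ is $\Gamma$-distinguishing if the only $\gamma\in\Gamma$ with $c\circ\gamma=c$ is the identity. For $W\subset X$ whose pointwise stabilizer in $\Gamma$ is trivial, the property $P(W)$ holds if every precoloring $c:X\setminus W\to\{R,B\}$ can be extended to a $\Gamma$-distinguishing coloring $X\to\{R,B\}$. The distinguishing extension number $\mathrm{ext}_D(X,\Gamma)$ is the smallest $m$ such that every $W\subset X$ with $|W|\geq m$ and trivial pointwise stabilizer satisfies $P(W)$ ($\infty$ if none exists). *)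

theory Defs
  imports "HOL-Analysis.Analysis" "HOL-Library.Extended_Nat"
begin

text \<open>Colorings with two colors R, B are encoded as functions into bool
  (True = R, False = B). A group acting on a set X is given as a set G of
  maps; two maps are identified when they agree on X.\<close>

definition isom :: "'a::metric_space set \<Rightarrow> ('a \<Rightarrow> 'a) set" where
  "isom X = {g. bij_betw g X X \<and> (\<forall>x\<in>X. \<forall>y\<in>X. dist (g x) (g y) = dist x y)}"

definition distinguishing :: "'a set \<Rightarrow> ('a \<Rightarrow> 'a) set \<Rightarrow> ('a \<Rightarrow> bool) \<Rightarrow> bool" where
  "distinguishing X G c \<longleftrightarrow>
     (\<forall>g\<in>G. (\<forall>x\<in>X. c (g x) = c x) \<longrightarrow> (\<forall>x\<in>X. g x = x))"

definition trivial_pointwise_stab :: "'a set \<Rightarrow> ('a \<Rightarrow> 'a) set \<Rightarrow> 'a set \<Rightarrow> bool" where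
  "trivial_pointwise_stab X G W \<longleftrightarrow>
     (\<forall>g\<in>G. (\<forall>w\<in>W. g w = w) \<longrightarrow> (\<forall>x\<in>X. g x = x))"

definition prop_P :: "'a set \<Rightarrow> ('a \<Rightarrow> 'a) set \<Rightarrow> 'a set \<Rightarrow> bool" where
  "prop_P X G W \<longleftrightarrow>
     (\<forall>c0 :: 'a \<Rightarrow> bool. \<exists>c. (\<forall>x\<in>X - W. c x = c0 x) \<and> distinguishing X G c)"

definition ecard :: "'a set \<Rightarrow> enat" where
  "ecard A = (if finite A then enat (card A) else \<infinity>)"

definition ext_D :: "'a set \<Rightarrow> ('a \<Rightarrow> 'a) set \<Rightarrow> enat" where
  "ext_D X G = Inf {m. \<forall>W. W \<subseteq> X \<and> ecard W \<ge> m \<and> trivial_pointwise_stab X G W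
                               \<longrightarrow> prop_P X G W}"

end

theory Submission imports Defs "HOL-Combinatorics.Transposition" begin

definition negc :: "'n::finite \<Rightarrow> real^'n \<Rightarrow> real^'n" where
  "negc i x = (\<chi> l. if l = i then - x$l else x$l)"
definition swp :: "'n::finite \<Rightarrow> 'n \<Rightarrow> real^'n \<Rightarrow> real^'n" where
  "swp i j x = (\<chi> l. x $ (Transposition.transpose i j l))"

lemma negc_inv: "negc i (negc i x) = x" by (simp add: negc_def vec_eq_iff)
lemma swp_inv: "swp i j (swp i j x) = x" by (simp add: swp_def vec_eq_iff)
lemma negc_diff: "negc i x - negc i y = negc i (x - y)" by (simp add: negc_def vec_eq_iff)
lemma swp_diff: "swp i j x - swp i j y = swp i j (x - y)" by (simp add: swp_def vec_eq_iff)
lemma negc_norm: "norm (negc i x) = norm x"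
  unfolding norm_eq_sqrt_inner inner_vec_def by (rule arg_cong[where f=sqrt], rule sum.cong) (auto simp: negc_def)
lemma swp_norm: "norm (swp i j x) = norm x"
proof -
  have "(\<Sum>l\<in>UNIV. x $ Transposition.transpose i j l * x $ Transposition.transpose i j l) = (\<Sum>l\<in>UNIV. x $ l * x $ l)"
    using sum.reindex_bij_betw[OF Transposition.bij_transpose[unfolded bij_betw_def[symmetric]], of "\<lambda>l. x $ l * x $ l" i j]
    by (metis (no_types, lifting) bij_betw_def Transposition.bij_transpose comp_apply sum.reindex)
  then show ?thesis unfolding norm_eq_sqrt_inner inner_vec_def by (simp add: swp_def)
qed

lemma three: fixes dummy :: "'a::finite" assumes "CARD('a) \<ge> 3" obtains i j k :: 'a where "i \<noteq> j" "i \<noteq> k" "j \<noteq> k"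
proof -
  obtain A :: "'a set" where "card A = 3" by (meson assms obtain_subset_with_card_n)
  then show ?thesis using that by (auto simp: card_3_iff)
qed

lemma step: "finite A \<Longrightarrow> card A \<ge> Suc n \<Longrightarrow> \<exists>x\<in>A. card (A - {x}) \<ge> n"
  by (metis Suc_le_D card_Diff_singleton card_gt_0_iff diff_Suc_1 ex_in_conv le_SucI not_less_eq_eq zero_less_Suc)

lemma isom_inv:
  fixes g :: "real^'n \<Rightarrow> real^'n"
  assumes inv: "\<And>x. g (g x) = x" and d: "\<And>x y. g x - g y = g (x - y)" and n: "\<And>x. norm (g x) = norm x"
  shows "g \<in> isom UNIV" "g \<in> isom (sphere 0 1)"
proof -
  have dist: "dist (g x) (g y) = dist x y" for x y by (simp add: dist_norm d n)
  have "bij_betw g UNIV UNIV" by (rule bij_betw_byWitness[where f'=g]) (auto simp: inv)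
  then show "g \<in> isom UNIV" by (simp add: isom_def dist)
  have "bij_betw g (sphere 0 1) (sphere 0 1)" by (rule bij_betw_byWitness[where f'=g]) (auto simp: inv n)
  then show "g \<in> isom (sphere 0 1)" by (simp add: isom_def dist)
qed

lemma inner_eq_of_dist:
  fixes x y a :: "real^'n"
  assumes "norm y = norm x" "dist y a = dist x a"
  shows "y \<bullet> a = x \<bullet> a"
proof -
  have "(dist y a)^2 = (dist x a)^2" using assms by simp
  then have "(y - a) \<bullet> (y - a) = (x - a) \<bullet> (x - a)" by (simp add: dist_norm power2_norm_eq_inner)
  moreover have "y \<bullet> y = x \<bullet> x" using assms(1) by (metis power2_norm_eq_inner)
  ultimately show ?thesis by (simp add: inner_diff inner_commute)
qed

lemma eq_of_axes:
  fixes x y :: "real^'n"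
  assumes "norm y = norm x" "\<And>k. dist y (axis k 1) = dist x (axis k 1)"
  shows "y = x"
proof -
  have "y $ k = x $ k" for k using inner_eq_of_dist[OF assms(1) assms(2)[of k]] by (simp add: inner_axis)
  then show ?thesis by (simp add: vec_eq_iff)
qed

lemma stab_UNIV:
  fixes W :: "(real^'n) set"
  assumes "0 \<in> W" "\<And>k. axis k 1 \<in> W"
  shows "trivial_pointwise_stab UNIV (isom UNIV) W"
  unfolding trivial_pointwise_stab_def
proof (intro ballI impI)
  fix g x assume g: "g \<in> isom UNIV" and fx: "\<forall>w\<in>W. g w = w" and "x \<in> (UNIV::(real^'n) set)"
  have d: "dist (g x) w = dist x w" if "w \<in> W" for w
  proof -
    have "dist (g x) (g w) = dist x w" using g unfolding isom_def by blast
    then show ?thesis using fx that by simp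
  qed
  show "g x = x"
  proof (rule eq_of_axes)
    show "norm (g x) = norm x" using d[OF assms(1)] by simp
    show "dist (g x) (axis k 1) = dist x (axis k 1)" for k by (rule d[OF assms(2)])
  qed
qed

lemma stab_sphere:
  fixes W :: "(real^'n) set"
  assumes "\<And>k. axis k 1 \<in> W" "W \<subseteq> sphere 0 1"
  shows "trivial_pointwise_stab (sphere 0 1) (isom (sphere 0 1)) W"
  unfolding trivial_pointwise_stab_def
proof (intro ballI impI)
  fix g x assume g: "g \<in> isom (sphere 0 1)" and fx: "\<forall>w\<in>W. g w = w" and x: "x \<in> sphere (0::real^'n) 1"
  have d: "dist (g x) w = dist x w" if "w \<in> W" for w
  proof -
    have "w \<in> sphere 0 1" using that assms(2) by blast
    then have "dist (g x) (g w) = dist x w" using g x unfolding isom_def by blast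
    then show ?thesis using fx that by simp
  qed
  have "bij_betw g (sphere 0 1) (sphere 0 1)" using g unfolding isom_def by blast
  then have "g x \<in> sphere 0 1" using x by (rule bij_betw_apply)
  then have n: "norm (g x) = norm x" using x by simp
  show "g x = x"
    by (rule eq_of_axes[OF n]) (rule d[OF assms(1)])
qed

lemma notP:
  assumes a: "a \<in> W" "a \<in> X" and b: "b \<in> W" "b \<in> X" and WX: "W \<subseteq> X"
    and ga: "ga \<in> G" "inj ga" "ga ` X \<subseteq> X" "\<forall>w\<in>W-{a}. ga w = w" "ga a \<noteq> a"
    and gb: "gb \<in> G" "inj gb" "gb ` X \<subseteq> X" "\<forall>w\<in>W-{b}. gb w = w" "gb b \<noteq> b"
    and gc: "gc \<in> G" "inj gc" "gc ` X \<subseteq> X" "\<forall>w\<in>W-{a,b}. gc w = w" "gc a = b" "gc b = a" "a \<noteq> b"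
  shows "\<not> prop_P X G W"
proof
  assume "prop_P X G W"
  then have "\<exists>c. (\<forall>x\<in>X - W. c x = (\<lambda>_. True) x) \<and> distinguishing X G c"
    unfolding prop_P_def by (rule spec)
  then obtain c where c: "\<forall>x\<in>X - W. c x = True" and dc: "distinguishing X G c" by auto
  have D: "g x = x" if "g \<in> G" "\<forall>x\<in>X. c (g x) = c x" "x \<in> X" for g x
    using dc that unfolding distinguishing_def by blast
  have A: "\<forall>x\<in>X. c (g x) = c x" if gi: "inj g" and gX: "g ` X \<subseteq> X" and gf: "\<forall>w\<in>W-{a'}. g w = w" and ca: "c a'" for g a'
  proof
    fix x assume x: "x \<in> X"
    show "c (g x) = c x"
    proof (cases "x \<in> W - {a'}")
      case True then show ?thesis using gf by simp
    next
      case False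
      then have cx: "c x"
      proof (cases "x = a'")
        case True then show ?thesis using ca by simp
      next
        case False
        then have "x \<in> X - W" using x \<open>x \<notin> W - {a'}\<close> by blast
        then show ?thesis using c by blast
      qed
      have gxX: "g x \<in> X" using gX x by blast
      have ngx: "g x \<notin> W - {a'}"
      proof
        assume h: "g x \<in> W - {a'}"
        then have "g (g x) = g x" using gf by blast
        then have "g x = x" by (rule injD[OF gi])
        then show False using False h by simp
      qed
      have "c (g x)"
      proof (cases "g x = a'")
        case True then show ?thesis using ca by simp
      next
        case False
        then have "g x \<in> X - W" using gxX ngx by blast
        then show ?thesis using c by blast
      qed
      then show ?thesis using cx by simp
    qed
  qed
  show False
  proof (cases "c a")
    case True
    have "ga a = a" by (rule D[OF ga(1) A[OF ga(2,3,4) True] a(2)])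
    then show False using ga(5) by simp
  next
    case ca: False
    show False
    proof (cases "c b")
      case True
      have "gb b = b" by (rule D[OF gb(1) A[OF gb(2,3,4) True] b(2)])
      then show False using gb(5) by simp
    next
      case cb: False
      have "\<forall>x\<in>X. c (gc x) = c x"
      proof
        fix x assume x: "x \<in> X"
        show "c (gc x) = c x"
        proof (cases "x \<in> W - {a,b}")
          case True then show ?thesis using gc(4) by simp
        next
          case False
          show ?thesis
          proof (cases "x = a \<or> x = b")
            case True then show ?thesis using gc(5,6) ca cb by auto
          next
            case F2: False
            then have "x \<in> X - W" using x False by blast
            then have cx: "c x" using c by blast
            have "gc x \<noteq> a"
            proof
              assume "gc x = a" then have "gc x = gc b" using gc(6) by simp
              then have "x = b" by (rule injD[OF gc(2)])
              then show False using F2 by simp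
            qed
            moreover have "gc x \<noteq> b"
            proof
              assume "gc x = b" then have "gc x = gc a" using gc(5) by simp
              then have "x = a" by (rule injD[OF gc(2)])
              then show False using F2 by simp
            qed
            moreover have "gc x \<notin> W - {a,b}"
            proof
              assume h: "gc x \<in> W - {a,b}"
              then have "gc (gc x) = gc x" using gc(4) by blast
              then have "gc x = x" by (rule injD[OF gc(2)])
              then show False using False h by simp
            qed
            ultimately have "gc x \<in> X - W" using gc(3) x by blast
            then have "c (gc x)" using c by blast
            then show ?thesis using cx by simp
          qed
        qed
      qed
      then have "gc a = a" by (rule D[OF gc(1) _ a(2)])
      then show False using gc(5,7) by simp
    qed
  qed
qed

lemma extD_inf:
  assumes "W \<subseteq> X" "infinite W" "trivial_pointwise_stab X G W" "\<not> prop_P X G W"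
  shows "ext_D X G = \<infinity>"
proof -
  have "{m. \<forall>W. W \<subseteq> X \<and> ecard W \<ge> m \<and> trivial_pointwise_stab X G W \<longrightarrow> prop_P X G W} = {}"
    using assms by (auto simp: ecard_def)
  then show ?thesis unfolding ext_D_def by (metis Inf_empty top_enat_def)
qed

lemma four: fixes dummy :: "'a::finite" assumes "CARD('a) \<ge> 4"
  obtains i j k l :: 'a where "i \<noteq> j" "i \<noteq> k" "j \<noteq> k" "l \<noteq> i" "l \<noteq> j" "l \<noteq> k"
proof -
  have "CARD('a) \<ge> 3" using assms by simp
  then obtain i j k :: 'a where d: "i \<noteq> j" "i \<noteq> k" "j \<noteq> k" by (rule three)
  have "card (UNIV - {i,j,k}) = CARD('a) - card {i,j,k}" by (rule card_Diff_subset) auto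
  moreover have "card {i,j,k} = 3" using d by simp
  ultimately have "card (UNIV - {i,j,k}) > 0" using assms by simp
  then obtain l where "l \<in> UNIV - {i,j,k}" by (metis card_gt_0_iff ex_in_conv)
  then show ?thesis using that d by auto
qed

lemma negc_fix: "x $ i = 0 \<Longrightarrow> negc i x = x" by (simp add: negc_def vec_eq_iff)
lemma swp_fix: "x $ i = x $ j \<Longrightarrow> swp i j x = x"
  by (simp add: swp_def vec_eq_iff Transposition.transpose_def)
lemma negc_axis: "negc i (axis i 1) \<noteq> axis i 1"
  by (simp add: negc_def vec_eq_iff axis_def)
lemma swp_axis: "swp i j (axis i 1) = axis j 1" "swp i j (axis j 1) = axis i 1"
  by (auto simp add: swp_def vec_eq_iff axis_def Transposition.transpose_def)
lemma negc_inj: "inj (negc i)" by (metis injI negc_inv)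
lemma swp_inj: "inj (swp i j)" by (metis injI swp_inv)
lemma negc_isom: "negc i \<in> isom UNIV" "negc i \<in> isom (sphere 0 1)"
  by (rule isom_inv, rule negc_inv, rule negc_diff, rule negc_norm)+
lemma swp_isom: "swp i j \<in> isom UNIV" "swp i j \<in> isom (sphere 0 1)"
  by (rule isom_inv, rule swp_inv, rule swp_diff, rule swp_norm)+
lemma negc_sphere: "negc i ` sphere 0 1 \<subseteq> sphere 0 1" by (auto simp: negc_norm)
lemma swp_sphere: "swp i j ` sphere 0 1 \<subseteq> sphere 0 1" by (auto simp: swp_norm)

lemma part_Rn:
  assumes "CARD('n::finite) \<ge> 3"
  shows "\<exists>W \<subseteq> (UNIV :: (real^'n) set). uncountable W
            \<and> trivial_pointwise_stab UNIV (isom UNIV) W \<and> \<not> prop_P UNIV (isom UNIV) W"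
proof -
  obtain i j k :: 'n where d: "i \<noteq> j" "i \<noteq> k" "j \<noteq> k" using three assms by metis
  define L :: "(real^'n) set" where "L = {x. x$i = 0 \<and> x$j = 0}"
  define W where "W = L \<union> {axis i 1, axis j 1}"
  have unc: "uncountable W"
  proof
    assume "countable W"
    moreover have "(\<lambda>t. axis k t) ` UNIV \<subseteq> W" using d by (auto simp: W_def L_def axis_def)
    ultimately have "countable ((\<lambda>t::real. axis k t) ` UNIV)" by (rule countable_subset[rotated])
    moreover have "inj (\<lambda>t::real. axis k t)" by (rule injI) (metis axis_nth)
    ultimately have "countable (UNIV::real set)" by (rule countable_image_inj_on)
    then show False using uncountable_UNIV_real by simp
  qed
  have ax: "axis q 1 \<in> W" for q
    by (cases "q = i"; cases "q = j") (auto simp: W_def L_def axis_def)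
  have st: "trivial_pointwise_stab UNIV (isom UNIV) W"
    by (rule stab_UNIV[OF _ ax]) (auto simp: W_def L_def)
  have np: "\<not> prop_P UNIV (isom UNIV) W"
  proof (rule notP[where a="axis i 1" and b="axis j 1" and ga="negc i" and gb="negc j" and gc="swp i j"])
    show "\<forall>w\<in>W - {axis i 1}. negc i w = w" using d by (auto simp: W_def L_def negc_fix axis_def)
    show "\<forall>w\<in>W - {axis j 1}. negc j w = w" using d by (auto simp: W_def L_def negc_fix axis_def)
    show "\<forall>w\<in>W - {axis i 1, axis j 1}. swp i j w = w" by (auto simp: W_def L_def swp_fix)
    show "axis i (1::real) \<noteq> axis j 1" using d by (simp add: axis_eq_axis)
  qed (auto simp: W_def negc_isom swp_isom negc_inj swp_inj negc_axis swp_axis)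
  show ?thesis using unc st np by blast
qed

lemma part_S:
  assumes "CARD('m::finite) \<ge> 4"
  shows "\<exists>W \<subseteq> sphere (0 :: real^'m) 1. uncountable W
            \<and> trivial_pointwise_stab (sphere 0 1) (isom (sphere 0 1)) W
            \<and> \<not> prop_P (sphere 0 1) (isom (sphere 0 1)) W"
proof -
  obtain i j k l :: 'm where d: "i \<noteq> j" "i \<noteq> k" "j \<noteq> k" "l \<noteq> i" "l \<noteq> j" "l \<noteq> k"
    using four assms by metis
  define L :: "(real^'m) set" where "L = {x. x$i = 0 \<and> x$j = 0} \<inter> sphere 0 1"
  define W where "W = L \<union> {axis i 1, axis j 1}"
  define p where "p t = axis k t + axis l (sqrt (1 - t^2))" for t :: real
  have pn: "norm (p t) = 1" if "t \<in> {0..1}" for t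
  proof -
    have "p t \<bullet> p t = t * t + sqrt (1 - t^2) * sqrt (1 - t^2)"
      using d unfolding p_def by (simp add: inner_add_left inner_add_right inner_axis_axis)
    also have "\<dots> = 1" using that by (simp add: power2_eq_square abs_square_le_1 flip: power2_eq_square)
    finally show ?thesis by (simp add: norm_eq_sqrt_inner)
  qed
  have pL: "p t \<in> W" if "t \<in> {0..1}" for t
  proof -
    have "p t $ i = 0" "p t $ j = 0" using d by (simp_all add: p_def axis_def)
    then show ?thesis using pn[OF that] by (simp add: W_def L_def)
  qed
  have pk: "p t $ k = t" for t using d by (simp add: p_def axis_def)
  have inj: "inj_on p {0..1}"
  proof (rule inj_onI)
    fix x y assume "p x = p y" then show "x = y" by (metis pk)
  qed
  have unc: "uncountable W"
  proof
    assume "countable W"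
    moreover have "p ` {0..1} \<subseteq> W" using pL by blast
    ultimately have "countable (p ` {0..1})" by (rule countable_subset[rotated])
    then have "countable {0..1::real}" using inj by (rule countable_image_inj_on)
    then show False using uncountable_closed_interval[of 0 1] by simp
  qed
  have ax: "axis q 1 \<in> W" for q
  proof (cases "q = i \<or> q = j")
    case True then show ?thesis by (auto simp: W_def)
  next
    case False
    then have h: "axis q (1::real) $ i = 0" "axis q (1::real) $ j = 0" by (auto simp: axis_def)
    show ?thesis by (simp add: W_def L_def h)
  qed
  have WS: "W \<subseteq> sphere 0 1" by (auto simp: W_def L_def norm_axis_1)
  have st: "trivial_pointwise_stab (sphere 0 1) (isom (sphere 0 1)) W"
    by (rule stab_sphere[OF ax WS])
  have np: "\<not> prop_P (sphere 0 1) (isom (sphere 0 1)) W"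
  proof (rule notP[where a="axis i 1" and b="axis j 1" and ga="negc i" and gb="negc j" and gc="swp i j"])
    show "\<forall>w\<in>W - {axis i 1}. negc i w = w" using d by (auto simp: W_def L_def negc_fix axis_def)
    show "\<forall>w\<in>W - {axis j 1}. negc j w = w" using d by (auto simp: W_def L_def negc_fix axis_def)
    show "\<forall>w\<in>W - {axis i 1, axis j 1}. swp i j w = w" by (auto simp: W_def L_def swp_fix)
    show "axis i (1::real) \<noteq> axis j 1" using d by (simp add: axis_eq_axis)
  qed (use WS in \<open>auto simp: W_def norm_axis_1 negc_isom swp_isom negc_inj swp_inj negc_axis swp_axis negc_sphere swp_sphere\<close>)
  show ?thesis using unc st np WS by blast
qed

theorem theorem2:
  assumes "CARD('n::finite) \<ge> 3" and "CARD('m::finite) \<ge> 4"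
  shows "(\<exists>W \<subseteq> (UNIV :: (real^'n) set). uncountable W
            \<and> trivial_pointwise_stab UNIV (isom UNIV) W \<and> \<not> prop_P UNIV (isom UNIV) W)
       \<and> ext_D (UNIV :: (real^'n) set) (isom UNIV) = \<infinity>
       \<and> (\<exists>W \<subseteq> sphere (0 :: real^'m) 1. uncountable W
            \<and> trivial_pointwise_stab (sphere 0 1) (isom (sphere 0 1)) W
            \<and> \<not> prop_P (sphere 0 1) (isom (sphere 0 1)) W)
       \<and> ext_D (sphere (0 :: real^'m) 1) (isom (sphere 0 1)) = \<infinity>"
proof -
  have A: "\<exists>W \<subseteq> (UNIV :: (real^'n) set). uncountable W
            \<and> trivial_pointwise_stab UNIV (isom UNIV) W \<and> \<not> prop_P UNIV (isom UNIV) W"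
    by (rule part_Rn[OF assms(1)])
  then obtain W :: "(real^'n) set" where W: "uncountable W" "trivial_pointwise_stab UNIV (isom UNIV) W"
      "\<not> prop_P UNIV (isom UNIV) W" by blast
  have "infinite W" using W(1) countable_finite by blast
  then have B: "ext_D (UNIV :: (real^'n) set) (isom UNIV) = \<infinity>"
    by (rule extD_inf[OF subset_UNIV _ W(2) W(3)])
  have C: "\<exists>W \<subseteq> sphere (0 :: real^'m) 1. uncountable W
            \<and> trivial_pointwise_stab (sphere 0 1) (isom (sphere 0 1)) W
            \<and> \<not> prop_P (sphere 0 1) (isom (sphere 0 1)) W"
    by (rule part_S[OF assms(2)])
  then obtain V :: "(real^'m) set" where V: "V \<subseteq> sphere 0 1" "uncountable V"
      "trivial_pointwise_stab (sphere 0 1) (isom (sphere 0 1)) V"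
      "\<not> prop_P (sphere 0 1) (isom (sphere 0 1)) V" by blast
  have "infinite V" using V(2) countable_finite by blast
  then have D: "ext_D (sphere (0 :: real^'m) 1) (isom (sphere 0 1)) = \<infinity>"
    by (rule extD_inf[OF V(1) _ V(3) V(4)])
  show ?thesis using A B C D by blast
qed

end
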